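(* Let $m(x,\xi)$ be a complex linear form on $\mathbf{C}^{2n}$ and consider the complex phase space translation $\exp(H_m)(\rho) = \rho + H_m$, $\rho \in \mathbf{C}^{2n}$. Let $\Phi$ be a strictly plurisubharmonic quadratic form on $\mathbf{C}^n$. Then $\exp(H_m)(\Lambda_{\Phi}) = \Lambda_{\Psi}$, where $\Psi$ is the strictly plurisubharmonic quadratic polynomial on $\mathbf{C}^n$ given by $$\Psi(x) = \Phi(x) + \mathrm{Im}\, \left(m\left(x,\frac{2}{i}\frac{\partial \Phi}{\partial x}(x)\right)\right),\quad x \in \mathbf{C}^n.$$
   Context: For a complex linear form $m(x,\xi)=m'_x\cdot x+m'_\xi\cdot\xi$ on $\mathbf{C}^{2n}$, its Hamilton vector field is the constant vector $H_m=(m'_\xi,-m'_x)\in\mathbf{C}^{2n}$. For a real-valued polynomial $\Phi$ on $\mathbf{C}^n$, $\Lambda_{\Phi} = \{(x,\frac{2}{i}\frac{\partial \Phi}{\partial x}(x)) : x\in \mathbf{C}^n\}\subset\mathbf{C}^{2n}$, with $\partial/\partial x$ the holomorphic derivative. *)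

theory Defs
  imports "HOL-Analysis.Analysis"
begin

text \<open>C^n is modelled as complex^'n (n = CARD('n)); C^{2n} as pairs (x, xi).\<close>

definition cdot :: "complex^'n \<Rightarrow> complex^'n \<Rightarrow> complex" where
  "cdot a x = (\<Sum>j\<in>UNIV. a$j * x$j)"

definition wirt_dz :: "'n \<Rightarrow> (complex^'n \<Rightarrow> complex) \<Rightarrow> complex^'n \<Rightarrow> complex" where
  "wirt_dz j f x = (frechet_derivative f (at x) (axis j 1)
                    - \<i> * frechet_derivative f (at x) (axis j \<i>)) / 2"

definition wirt_dzbar :: "'n \<Rightarrow> (complex^'n \<Rightarrow> complex) \<Rightarrow> complex^'n \<Rightarrow> complex" where
  "wirt_dzbar j f x = (frechet_derivative f (at x) (axis j 1)
                    + \<i> * frechet_derivative f (at x) (axis j \<i>)) / 2"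

definition holo_grad :: "(complex^'n \<Rightarrow> real) \<Rightarrow> complex^'n \<Rightarrow> complex^'n" where
  "holo_grad \<Phi> x = (\<chi> j. wirt_dz j (\<lambda>y. complex_of_real (\<Phi> y)) x)"

definition Lambda :: "(complex^'n \<Rightarrow> real) \<Rightarrow> ((complex^'n) \<times> (complex^'n)) set" where
  "Lambda \<Phi> = {(x, \<chi> j. (2 / \<i>) * holo_grad \<Phi> x $ j) | x. True}"

definition real_quadratic_form :: "(complex^'n \<Rightarrow> real) \<Rightarrow> bool" where
  "real_quadratic_form \<Phi> \<longleftrightarrow>
     (\<exists>B :: complex^'n \<Rightarrow> complex^'n \<Rightarrow> real. bounded_bilinear B \<and> (\<forall>x. \<Phi> x = B x x))"

definition real_quadratic_poly :: "(complex^'n \<Rightarrow> real) \<Rightarrow> bool" where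
  "real_quadratic_poly \<Psi> \<longleftrightarrow>
     (\<exists>Q L c. real_quadratic_form Q \<and> linear (L :: complex^'n \<Rightarrow> real)
             \<and> (\<forall>x. \<Psi> x = Q x + L x + c))"

definition strictly_psh :: "(complex^'n \<Rightarrow> real) \<Rightarrow> bool" where
  "strictly_psh \<Phi> \<longleftrightarrow>
     (\<forall>x t. t \<noteq> 0 \<longrightarrow>
        0 < Re (\<Sum>j\<in>UNIV. \<Sum>k\<in>UNIV.
               wirt_dz j (wirt_dzbar k (\<lambda>y. complex_of_real (\<Phi> y))) x * t$j * cnj (t$k)))"

end

theory Submission imports Defs begin

lemma wz_at: assumes "(g has_derivative G) (at x)"
  shows "wirt_dz j g x = (G (axis j 1) - \<i> * G (axis j \<i>)) / 2"
  by (simp add: wirt_dz_def frechet_derivative_at[OF assms, symmetric])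

lemma wzbar_at: assumes "(g has_derivative G) (at x)"
  shows "wirt_dzbar j g x = (G (axis j 1) + \<i> * G (axis j \<i>)) / 2"
  by (simp add: wirt_dzbar_def frechet_derivative_at[OF assms, symmetric])

lemma axis_split: "axis j (c::complex) = Re c *\<^sub>R axis j 1 + Im c *\<^sub>R axis j \<i>"
  by (auto simp: vec_eq_iff axis_def complex_eq_iff)

lemma vec_axis_sum: "(x::complex^'n) = (\<Sum>j\<in>UNIV. Re (x$j) *\<^sub>R axis j 1 + Im (x$j) *\<^sub>R axis j \<i>)"
proof -
  have "\<And>i. (x$i) *s axis i (1::complex) = axis i (x$i)" by (simp add: vec_eq_iff axis_def)
  then have "x = (\<Sum>j\<in>UNIV. axis j (x$j))" using basis_expansion[of x] by simp
  also have "\<dots> = (\<Sum>j\<in>UNIV. Re (x$j) *\<^sub>R axis j 1 + Im (x$j) *\<^sub>R axis j \<i>)"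
    by (rule sum.cong[OF refl], rule axis_split)
  finally show ?thesis .
qed

lemma lin_expand: assumes "linear (d :: complex^'n \<Rightarrow> real)"
  shows "d x = (\<Sum>j\<in>UNIV. Re (x$j) * d (axis j 1) + Im (x$j) * d (axis j \<i>))"
proof -
  have "d x = d (\<Sum>j\<in>UNIV. Re (x$j) *\<^sub>R axis j 1 + Im (x$j) *\<^sub>R axis j \<i>)"
    using vec_axis_sum[of x] by (rule arg_cong)
  also have "\<dots> = (\<Sum>j\<in>UNIV. d (Re (x$j) *\<^sub>R axis j 1 + Im (x$j) *\<^sub>R axis j \<i>))"
    by (rule linear_sum[OF assms])
  also have "\<dots> = (\<Sum>j\<in>UNIV. Re (x$j) * d (axis j 1) + Im (x$j) * d (axis j \<i>))"
    by (rule sum.cong[OF refl]) (simp only: linear_add[OF assms] linear_scale[OF assms] real_scaleR_def)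
  finally show ?thesis .
qed

lemma cdot_axis: "cdot a (axis j c) = a$j * c"
proof -
  have "(\<Sum>k\<in>UNIV. a$k * axis j c $ k) = (\<Sum>k\<in>UNIV. if k = j then a$k * c else 0)"
    by (rule sum.cong) (auto simp: axis_def)
  then show ?thesis by (simp add: cdot_def)
qed

lemma wz_affine:
  assumes "bounded_linear L" "g = (\<lambda>y. L y + c)"
  shows "wirt_dz j g x = (L (axis j 1) - \<i> * L (axis j \<i>)) / 2"
proof -
  have "(g has_derivative L) (at x)" unfolding assms(2)
    using has_derivative_add[OF bounded_linear_imp_has_derivative[OF assms(1)] has_derivative_const]
    by simp
  then show ?thesis by (rule wz_at)
qed

lemma cdot_linear: "bounded_linear (\<lambda>h. Im (cdot a h))"
proof -
  have "linear (\<lambda>h. Im (cdot a h))"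
    by (rule linearI) (auto simp: cdot_def sum.distrib algebra_simps sum_distrib_left Im_sum)
  then show ?thesis by (simp add: linear_conv_bounded_linear)
qed

lemma termj_gen: "Im (z * ((2/\<i>) * ((complex_of_real r - \<i> * complex_of_real s)/2))) = - (Re z * r + Im z * s)"
proof -
  have "(2/\<i>) * ((complex_of_real r - \<i> * complex_of_real s)/2) = Complex (-s) (-r)"
    by (simp add: complex_eq_iff)
  then show ?thesis by simp
qed

lemma keygen: "(2/\<i>) * ((complex_of_real (p + Im (c * 1)) - \<i> * complex_of_real (q + Im (c * \<i>))) / 2)
   = (2/\<i>) * ((complex_of_real p - \<i> * complex_of_real q)/2) - c"
  by (simp add: complex_eq_iff)

lemma splitgen: "(complex_of_real (p + r) + \<i> * complex_of_real (q + s))/2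
   = (complex_of_real p + \<i> * complex_of_real q)/2 + (complex_of_real r + \<i> * complex_of_real s)/2"
  by (simp add: complex_eq_iff)

lemma bl_gen: assumes "bounded_linear (f :: 'a::real_normed_vector \<Rightarrow> real)" "bounded_linear g"
  shows "bounded_linear (\<lambda>y. (complex_of_real (f y) + \<i> * complex_of_real (g y))/2)"
proof -
  have h1: "bounded_linear (\<lambda>y. complex_of_real (f y))"
    by (rule bounded_linear_compose[OF bounded_linear_of_real assms(1)])
  have h2: "bounded_linear (\<lambda>y. complex_of_real (g y))"
    by (rule bounded_linear_compose[OF bounded_linear_of_real assms(2)])
  have h3: "bounded_linear (\<lambda>y. \<i> * complex_of_real (g y))"
    by (rule bounded_linear_compose[OF bounded_linear_mult_right h2])
  have h4: "bounded_linear (\<lambda>y. complex_of_real (f y) + \<i> * complex_of_real (g y))"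
    by (rule bounded_linear_add[OF h1 h3])
  show ?thesis by (rule bounded_linear_compose[OF bounded_linear_divide h4])
qed

theorem lemma2p2:
  fixes \<Phi> :: "complex^'n \<Rightarrow> real" and a b :: "complex^'n"
  assumes "real_quadratic_form \<Phi>" and "strictly_psh \<Phi>"
  shows "(let m = (\<lambda>x \<xi>. cdot a x + cdot b \<xi>);
              H\<^sub>m = (b, - a);
              \<Psi> = (\<lambda>x. \<Phi> x + Im (m x (\<chi> j. (2 / \<i>) * holo_grad \<Phi> x $ j)))
          in (\<lambda>\<rho>. \<rho> + H\<^sub>m) ` Lambda \<Phi> = Lambda \<Psi>
             \<and> strictly_psh \<Psi> \<and> real_quadratic_poly \<Psi>)"
proof -
  obtain B where bb: "bounded_bilinear B" and PB: "\<And>x. \<Phi> x = B x x"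
    using assms(1) unfolding real_quadratic_form_def by blast
  interpret B: bounded_bilinear B by (rule bb)
  define D where "D x h = B x h + B h x" for x h
  have linD: "linear (D x)" for x
    unfolding D_def using B.bounded_linear_right[of x] B.bounded_linear_left[of x]
    by (intro linear_compose_add) (auto intro: bounded_linear.linear)
  have Phieq: "\<Phi> = (\<lambda>x. B x x)" using PB by auto
  have dPhi: "(\<Phi> has_derivative D x) (at x)" for x
    unfolding Phieq D_def using B.FDERIV[OF has_derivative_ident has_derivative_ident, of x UNIV]
    by (simp add: add.commute)
  have hg: "holo_grad \<Phi> x $ j = (of_real (D x (axis j 1)) - \<i> * of_real (D x (axis j \<i>))) / 2" for x j
    unfolding holo_grad_def using wz_at[OF has_derivative_of_real[OF dPhi]] by simp
  define \<Psi> where "\<Psi> = (\<lambda>x. \<Phi> x + Im ((\<lambda>x \<xi>. cdot a x + cdot b \<xi>) x (\<chi> j. (2 / \<i>) * holo_grad \<Phi> x $ j)))"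
  have termj: "Im (b$j * ((2 / \<i>) * holo_grad \<Phi> x $ j)) = - (Re (b$j) * D x (axis j 1) + Im (b$j) * D x (axis j \<i>))" for x j
    unfolding hg by (rule termj_gen)
  have Psi_eq: "\<Psi> x = B x x - B x b - B b x + Im (cdot a x)" for x
  proof -
    have "Im (cdot b (\<chi> j. (2 / \<i>) * holo_grad \<Phi> x $ j)) = (\<Sum>j\<in>UNIV. Im (b$j * ((2 / \<i>) * holo_grad \<Phi> x $ j)))"
      by (simp only: cdot_def Im_sum vec_lambda_beta)
    also have "\<dots> = - D x b" unfolding termj lin_expand[OF linD, of x b] by (simp only: sum_negf)
    finally have e2: "Im (cdot b (\<chi> j. (2 / \<i>) * holo_grad \<Phi> x $ j)) = - D x b" .
    have e1: "\<Psi> x = \<Phi> x + (Im (cdot a x) + Im (cdot b (\<chi> j. (2 / \<i>) * holo_grad \<Phi> x $ j)))"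
      unfolding \<Psi>_def by (simp only: plus_complex.sel)
    show ?thesis unfolding e1 e2 D_def PB by linarith
  qed
  define D' where "D' x h = D x h - B h b - B b h + Im (cdot a h)" for x h
  have dPsi: "(\<Psi> has_derivative D' x) (at x)" for x
  proof -
    have f1: "((\<lambda>x. B x x) has_derivative D x) (at x)"
      using dPhi Phieq by simp
    have f2: "((\<lambda>x. B x b) has_derivative (\<lambda>h. B h b)) (at x)"
      by (rule bounded_linear_imp_has_derivative[OF B.bounded_linear_left])
    have f3: "((\<lambda>x. B b x) has_derivative (\<lambda>h. B b h)) (at x)"
      by (rule bounded_linear_imp_has_derivative[OF B.bounded_linear_right])
    have f4: "((\<lambda>x. Im (cdot a x)) has_derivative (\<lambda>h. Im (cdot a h))) (at x)"
      by (rule bounded_linear_imp_has_derivative[OF cdot_linear])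
    have "((\<lambda>x. B x x - B x b - B b x + Im (cdot a x)) has_derivative
           (\<lambda>h. D x h - B h b - B b h + Im (cdot a h))) (at x)"
      by (rule has_derivative_add[OF has_derivative_diff[OF has_derivative_diff[OF f1 f2] f3] f4])
    moreover have "\<Psi> = (\<lambda>x. B x x - B x b - B b x + Im (cdot a x))"
      by (rule ext) (rule Psi_eq)
    moreover have "D' x = (\<lambda>h. D x h - B h b - B b h + Im (cdot a h))"
      by (rule ext) (simp only: D'_def)
    ultimately show ?thesis by (simp only:)
  qed
  have hgP: "holo_grad \<Psi> y $ j = (of_real (D' y (axis j 1)) - \<i> * of_real (D' y (axis j \<i>))) / 2" for y j
    unfolding holo_grad_def using wz_at[OF has_derivative_of_real[OF dPsi]] by simp
  have key: "(\<chi> j. (2 / \<i>) * holo_grad \<Psi> y $ j) = (\<chi> j. (2 / \<i>) * holo_grad \<Phi> (y - b) $ j) - a" for y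
  proof -
    have "(2 / \<i>) * holo_grad \<Psi> y $ j = (2 / \<i>) * holo_grad \<Phi> (y - b) $ j - a$j" for j
    proof -
      have dd: "D' y h = D (y - b) h + Im (cdot a h)" for h
        unfolding D'_def D_def B.diff_left B.diff_right by simp
      show ?thesis unfolding hgP hg dd cdot_axis by (simp only: keygen vec_lambda_beta)
    qed
    then show ?thesis by (simp add: vec_eq_iff)
  qed
  have lam: "(\<lambda>\<rho>. \<rho> + (b, - a)) ` Lambda \<Phi> = Lambda \<Psi>"
  proof
    show "(\<lambda>\<rho>. \<rho> + (b, - a)) ` Lambda \<Phi> \<subseteq> Lambda \<Psi>"
    proof
      fix z assume "z \<in> (\<lambda>\<rho>. \<rho> + (b, - a)) ` Lambda \<Phi>"
      then obtain x where zx: "z = (x, (\<chi> j. (2 / \<i>) * holo_grad \<Phi> x $ j)) + (b, - a)"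
        unfolding Lambda_def by blast
      have xb: "x + b - b = x" by simp
      have "z = (x + b, (\<chi> j. (2 / \<i>) * holo_grad \<Psi> (x + b) $ j))"
        unfolding zx key[of "x + b"] xb add_Pair by (simp only: diff_conv_add_uminus)
      then show "z \<in> Lambda \<Psi>" unfolding Lambda_def by blast
    qed
  next
    show "Lambda \<Psi> \<subseteq> (\<lambda>\<rho>. \<rho> + (b, - a)) ` Lambda \<Phi>"
    proof
      fix z assume "z \<in> Lambda \<Psi>"
      then obtain y where z: "z = (y, (\<chi> j. (2 / \<i>) * holo_grad \<Psi> y $ j))"
        unfolding Lambda_def by auto
      have "(y - b, (\<chi> j. (2 / \<i>) * holo_grad \<Phi> (y - b) $ j)) \<in> Lambda \<Phi>"
        unfolding Lambda_def by blast
      moreover have "z = (y - b, (\<chi> j. (2 / \<i>) * holo_grad \<Phi> (y - b) $ j)) + (b, - a)"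
        unfolding z key[of y] add_Pair diff_add_cancel by (simp only: diff_conv_add_uminus)
      ultimately show "z \<in> (\<lambda>\<rho>. \<rho> + (b, - a)) ` Lambda \<Phi>" by blast
    qed
  qed
  define L where "L k y = (of_real (D y (axis k 1)) + \<i> * of_real (D y (axis k \<i>))) / 2" for k y
  have bL: "bounded_linear (L k)" for k
  proof -
    have "bounded_linear (\<lambda>y. D y h)" for h unfolding D_def
      by (intro bounded_linear_add B.bounded_linear_left B.bounded_linear_right)
    then have "bounded_linear (\<lambda>y. (complex_of_real (D y (axis k 1)) + \<i> * complex_of_real (D y (axis k \<i>)))/2)"
      by (intro bl_gen)
    then show ?thesis unfolding L_def[abs_def] by simp
  qed
  have zbP: "wirt_dzbar k (\<lambda>y. complex_of_real (\<Phi> y)) = (\<lambda>y. L k y + 0)" for k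
    by (rule ext, subst wzbar_at[OF has_derivative_of_real[OF dPhi]]) (simp add: L_def)
  define c where "c k = (of_real (- B (axis k 1) b - B b (axis k 1) + Im (cdot a (axis k 1)))
       + \<i> * of_real (- B (axis k \<i>) b - B b (axis k \<i>) + Im (cdot a (axis k \<i>)))) / 2" for k
  have zbS: "wirt_dzbar k (\<lambda>y. complex_of_real (\<Psi> y)) = (\<lambda>y. L k y + c k)" for k
  proof (rule ext)
    fix y
    have "D' y h = D y h + (- B h b - B b h + Im (cdot a h))" for h
      unfolding D'_def by simp
    then show "wirt_dzbar k (\<lambda>y. complex_of_real (\<Psi> y)) y = L k y + c k"
      unfolding wzbar_at[OF has_derivative_of_real[OF dPsi]] L_def c_def
      by (simp only: splitgen)
  qed
  have second: "wirt_dz j (wirt_dzbar k (\<lambda>y. complex_of_real (\<Psi> y))) x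
      = wirt_dz j (wirt_dzbar k (\<lambda>y. complex_of_real (\<Phi> y))) x" for j k x
    by (simp only: wz_affine[OF bL zbS] wz_affine[OF bL zbP])
  have psh: "strictly_psh \<Psi>"
    using assms(2) unfolding strictly_psh_def second .
  have poly: "real_quadratic_poly \<Psi>"
  proof -
    have "bounded_linear (\<lambda>x. - B x b - B b x + Im (cdot a x))"
      by (intro bounded_linear_add bounded_linear_sub bounded_linear_minus
          B.bounded_linear_left B.bounded_linear_right cdot_linear)
    then have "linear (\<lambda>x. - B x b - B b x + Im (cdot a x))" by (rule bounded_linear.linear)
    moreover have "\<forall>x. \<Psi> x = \<Phi> x + (- B x b - B b x + Im (cdot a x)) + 0"
      using Psi_eq PB by simp
    ultimately show ?thesis unfolding real_quadratic_poly_def using assms(1) by blast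
  qed
  show ?thesis unfolding Let_def \<Psi>_def[symmetric] using lam psh poly by blast
qed

end
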